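(* For every positive integer $k$, every real $0\le\gamma\le1$ and every real $x\ge k$, $$\sum_{i=0}^k\binom{x}{i}\gamma^i\ \ge\ \frac14\Big(\sum_{i=0}^k\binom{x}{i}\Big)^{\log_2(1+\gamma)}.$$
   Context: For real $y$ and integer $i\ge0$, $\binom{y}{i}=y(y-1)\cdots(y-i+1)/i!$. *)

theory Defs
  imports "HOL-Analysis.Analysis"
begin

end

theory Submission imports Defs begin

definition TT :: "real \<Rightarrow> nat \<Rightarrow> real \<Rightarrow> real" where
  "TT g k x = (\<Sum>i=0..k. (x gchoose i) * g ^ i)"

lemma gnn: fixes x :: real assumes "real i \<le> x + 1" shows "0 \<le> x gchoose i"
  unfolding gbinomial_prod_rev using assms
  by (auto intro!: divide_nonneg_pos prod_nonneg)

lemma gmono: fixes x y :: real assumes "real i \<le> y + 1" "y \<le> x"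
  shows "y gchoose i \<le> x gchoose i"
  unfolding gbinomial_prod_rev using assms
  by (auto intro!: divide_right_mono prod_mono)

lemma TT_nonneg: assumes "0 \<le> g" "real k \<le> x + 1" shows "0 \<le> TT g k x"
  unfolding TT_def using assms by (auto intro!: sum_nonneg mult_nonneg_nonneg gnn)

lemma TT_mono: assumes "0 \<le> g" "real k \<le> y + 1" "y \<le> x" shows "TT g k y \<le> TT g k x"
  unfolding TT_def using assms by (auto intro!: sum_mono mult_right_mono gmono)

lemma TT_rec: "TT g (Suc m) x = TT g (Suc m) (x-1) + g * TT g m (x-1)"
proof -
  have e: "x gchoose (Suc i) = ((x-1) gchoose i) + ((x-1) gchoose Suc i)" for i
    using gbinomial_Suc_Suc[of "x-1" i] by simp
  have "TT g (Suc m) x = (\<Sum>i\<le>Suc m. (x gchoose i) * g ^ i)"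
    by (simp add: TT_def atLeast0AtMost)
  also have "\<dots> = 1 + (\<Sum>i\<le>m. (x gchoose Suc i) * g ^ Suc i)"
    by (subst sum.atMost_Suc_shift) simp
  also have "\<dots> = 1 + (\<Sum>i\<le>m. ((x-1) gchoose Suc i) * g ^ Suc i) + g * (\<Sum>i\<le>m. ((x-1) gchoose i) * g ^ i)"
    by (simp add: e algebra_simps sum.distrib sum_distrib_left)
  also have "1 + (\<Sum>i\<le>m. ((x-1) gchoose Suc i) * g ^ Suc i) = TT g (Suc m) (x-1)"
    by (simp add: TT_def atLeast0AtMost sum.atMost_Suc_shift del: sum.atMost_Suc)
  also have "(\<Sum>i\<le>m. ((x-1) gchoose i) * g ^ i) = TT g m (x-1)"
    by (simp add: TT_def atLeast0AtMost)
  finally show ?thesis .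
qed

lemma TT_int: "TT g k (real k) = (g + 1) ^ k"
  by (simp add: TT_def atLeast0AtMost binomial_ring binomial_gbinomial[symmetric])

lemma TT1_int: "TT 1 k (real k + 1) \<le> 2 ^ (k+1)"
proof -
  have "TT 1 k (real k + 1) = (\<Sum>i\<le>k. real (Suc k choose i))"
    by (simp add: TT_def atLeast0AtMost binomial_gbinomial add.commute)
  also have "\<dots> \<le> (\<Sum>i\<le>Suc k. real (Suc k choose i))" by simp
  also have "\<dots> = 2 ^ (k+1)" using choose_row_sum[of "Suc k"]
    by (metis Suc_eq_plus1 of_nat_numeral of_nat_power of_nat_sum)
  finally show ?thesis .
qed

lemma incr_bound:
  fixes a s :: real
  assumes a: "0 \<le> a" "a \<le> 1" and s: "1 \<le> s"
  shows "(s+1) powr a - s powr a \<le> 2 powr a - 1"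
proof -
  have "(\<lambda>t. (t+1) powr a - t powr a) 1 \<ge> (\<lambda>t. (t+1) powr a - t powr a) s"
  proof (rule DERIV_nonpos_imp_decreasing_open[OF s])
    fix t :: real assume t: "1 < t" "t < s"
    have d: "((\<lambda>t. (t+1) powr a - t powr a) has_real_derivative
              a * (t+1) powr (a-1) * 1 - a * t powr (a-1)) (at t)"
      using t by (auto intro!: derivative_eq_intros)
    have "(t+1) powr (a-1) \<le> t powr (a-1)"
      using t a by (intro powr_mono2') auto
    then have "a * (t+1) powr (a-1) * 1 - a * t powr (a-1) \<le> 0"
      using a by (simp add: mult_left_mono)
    with d show "\<exists>y. ((\<lambda>t. (t+1) powr a - t powr a) has_real_derivative y) (at t) \<and> y \<le> 0"
      by blast
  next
    show "continuous_on {1..s} (\<lambda>t. (t+1) powr a - t powr a)"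
      by (intro continuous_intros) auto
  qed
  then show ?thesis by simp
qed

lemma key:
  fixes a A B :: real
  assumes a: "0 \<le> a" "a \<le> 1" and B: "0 \<le> B" "B \<le> A"
  shows "(A+B) powr a \<le> A powr a + (2 powr a - 1) * B powr a"
proof (cases "B = 0")
  case True then show ?thesis by simp
next
  case False
  then have Bp: "B > 0" using B by simp
  define s where "s = A/B"
  have s1: "1 \<le> s" using B Bp by (simp add: s_def)
  have A: "A = s * B" using Bp by (simp add: s_def)
  have "(A+B) powr a = (s+1) powr a * B powr a"
    using A Bp s1 by (simp add: powr_mult[symmetric] algebra_simps)
  also have "\<dots> \<le> (s powr a + (2 powr a - 1)) * B powr a"
    using incr_bound[OF a s1] by (intro mult_right_mono) auto
  also have "\<dots> = A powr a + (2 powr a - 1) * B powr a"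
    using A Bp s1 by (simp add: powr_mult algebra_simps)
  finally show ?thesis .
qed

lemma main:
  fixes g :: real
  assumes g: "0 \<le> g" "g \<le> 1"
  defines "a \<equiv> log 2 (1 + g)"
  shows "\<forall>k x. real k \<le> x \<longrightarrow> x < real n \<longrightarrow> TT g k x \<ge> (TT 1 k x) powr a / 2"
proof -
  have ga: "2 powr a = 1 + g" using g by (simp add: a_def)
  have a0: "0 \<le> a" using g by (simp add: a_def)
  have a1: "a \<le> 1" using g by (simp add: a_def)
  show ?thesis
  proof (induction n)
    case 0
    then show ?case by auto
  next
    case (Suc n)
    show ?case
    proof (intro allI impI)
      fix k x assume kx: "real k \<le> x" and xn: "x < real (Suc n)"
      show "TT g k x \<ge> (TT 1 k x) powr a / 2"
      proof (cases "x < real k + 1")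
        case True
        have "TT 1 k x \<le> TT 1 k (real k + 1)"
          using True kx by (intro TT_mono) auto
        also have "\<dots> \<le> 2 ^ (k+1)" by (rule TT1_int)
        finally have s: "TT 1 k x \<le> 2 ^ (k+1)" .
        have s0: "0 \<le> TT 1 k x" using kx by (intro TT_nonneg) auto
        have "(TT 1 k x) powr a \<le> (2 ^ (k+1)) powr a"
          using s s0 a0 by (intro powr_mono2) auto
        also have "(2 ^ (k+1)) powr a = (1+g) ^ (k+1)"
        proof -
          have "(2::real) ^ (k+1) = 2 powr real (k+1)" by (subst powr_realpow) auto
          then have "((2::real) ^ (k+1)) powr a = (2 powr a) powr real (k+1)"
            by (simp add: powr_powr mult.commute)
          also have "\<dots> = (1+g) powr real (k+1)" using ga by simp
          also have "\<dots> = (1+g) ^ (k+1)" using g by (subst powr_realpow) auto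
          finally show ?thesis .
        qed
        also have "\<dots> \<le> 2 * (1+g) ^ k" using g by simp
        also have "(1+g)^k = TT g k (real k)" by (simp add: TT_int add.commute)
        also have "\<dots> \<le> TT g k x" using kx g by (intro TT_mono) auto
        finally show ?thesis by simp
      next
        case False
        then have x1: "real k + 1 \<le> x" by simp
        show ?thesis
        proof (cases k)
          case 0
          then show ?thesis by (simp add: TT_def)
        next
          case (Suc m)
          have IH1: "TT g k (x-1) \<ge> (TT 1 k (x-1)) powr a / 2"
            using Suc.IH x1 xn by auto
          have IH2: "TT g m (x-1) \<ge> (TT 1 m (x-1)) powr a / 2"
            using Suc.IH x1 xn \<open>k = Suc m\<close> by auto
          define A where "A = TT 1 k (x-1)"
          define B where "B = TT 1 m (x-1)"
          have B0: "0 \<le> B" unfolding B_def using x1 \<open>k = Suc m\<close> by (intro TT_nonneg) auto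
          have BA: "B \<le> A"
          proof -
            have "A = B + ((x-1) gchoose k)"
              by (simp add: A_def B_def TT_def \<open>k = Suc m\<close>)
            moreover have "0 \<le> (x-1) gchoose k" using x1 by (intro gnn) auto
            ultimately show ?thesis by simp
          qed
          have "(TT 1 k x) powr a = (A + B) powr a"
            using TT_rec[of 1 m x] by (simp add: A_def B_def \<open>k = Suc m\<close>)
          also have "\<dots> \<le> A powr a + g * B powr a"
            using key[OF a0 a1 B0 BA] ga by simp
          also have "\<dots> \<le> 2 * TT g k (x-1) + g * (2 * TT g m (x-1))"
            using IH1 IH2 g unfolding A_def B_def by (intro add_mono mult_left_mono) auto
          also have "\<dots> = 2 * TT g k x"
            using TT_rec[of g m x] by (simp add: \<open>k = Suc m\<close> algebra_simps)
          finally show ?thesis by simp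
        qed
      qed
    qed
  qed
qed

theorem lemma2p4:
  fixes k :: nat and \<gamma> x :: real
  assumes "k \<ge> 1" and "0 \<le> \<gamma>" and "\<gamma> \<le> 1" and "x \<ge> real k"
  shows "(\<Sum>i=0..k. (x gchoose i) * \<gamma> ^ i)
           \<ge> (1/4) * (\<Sum>i=0..k. x gchoose i) powr (log 2 (1 + \<gamma>))"
proof -
  obtain n :: nat where "x < real n" using reals_Archimedean2 by blast
  then have "TT \<gamma> k x \<ge> (TT 1 k x) powr (log 2 (1 + \<gamma>)) / 2"
    using main[OF assms(2,3), of n] assms(4) by blast
  moreover have "0 \<le> TT \<gamma> k x" using assms by (intro TT_nonneg) auto
  ultimately have "TT \<gamma> k x \<ge> (1/4) * (TT 1 k x) powr (log 2 (1 + \<gamma>))" by simp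
  then show ?thesis by (simp add: TT_def)
qed

end
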